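(* Let $M(C,\bar\xi,\pi)$ be a Myller configuration in $E^3$ with Darboux frame $(\bar\xi,\bar\mu,\bar v)$ and invariants $G,K,T$ (notation in the context), and assume $(G(s),K(s))\neq(0,0)$ for all $s$. Define $$\sigma_\xi=\frac{K^{2}\left(\frac{G}{K}\right)'-(G^{2}+K^{2})T}{(G^{2}+K^{2})^{3/2}},$$ where $K^2\left(\frac{G}{K}\right)'$ stands for $G'K-GK'$. Then $C$ is a $\bar\xi$-helix in $M$ if and only if $\sigma_\xi$ is constant; in that case the constant angle $\theta$ between $\bar\xi$ and the fixed axis satisfies $\cot\theta=\mp\sigma_\xi$ (for an appropriate choice of sign).
   Context: Let $C$ be a smooth curve in Euclidean 3-space $E^3$ parametrized by arclength $s\in I$; primes denote $d/ds$. A Myller configuration $M(C,\bar\xi,\pi)$ consists of a smooth unit vector field (versor field) $\bar\xi(s)$ along $C$ and a smooth field of oriented planes $\pi(s)$ along $C$ with $\bar\xi(s)\in\pi(s)$. Let $\bar v(s)$ be the unit normal of the oriented plane $\pi(s)$ and $\bar\mu=\bar v\times\bar\xi$. The Darboux frame $(\bar\xi,\bar\mu,\bar v)$ is a positively oriented orthonormal frame satisfying $\bar\xi'=G\bar\mu+K\bar v$, $\bar\mu'=-G\bar\xi+T\bar v$, $\bar v'=-K\bar\xi-T\bar\mu$, where the smooth functions $G,K,T$ are called the geodesic curvature, normal curvature and geodesic torsion of $(C,\bar\xi)$ in $M$. The curve $C$ is called a $\bar\xi$-helix in $M$ if there exist a fixed (constant) unit vector $\bar d_\xi$ and a constant $\theta$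 with $\langle\bar\xi(s),\bar d_\xi\rangle=\cos\theta$ for all $s$. *)

theory Defs
  imports "HOL-Analysis.Analysis"
begin

text \<open>Myller configuration M(C, xi, pi) along a curve C parametrized by arclength on I,
  given by its Darboux frame (xi, mu, nu) (nu = unit normal of the oriented plane pi,
  mu = nu x xi) and invariants G (geodesic curvature), K (normal curvature),
  T (geodesic torsion).\<close>
definition myller_darboux ::
  "real set \<Rightarrow> (real \<Rightarrow> real^3) \<Rightarrow> (real \<Rightarrow> real^3) \<Rightarrow> (real \<Rightarrow> real^3)
    \<Rightarrow> (real \<Rightarrow> real^3) \<Rightarrow> (real \<Rightarrow> real) \<Rightarrow> (real \<Rightarrow> real) \<Rightarrow> (real \<Rightarrow> real) \<Rightarrow> bool"
where
  "myller_darboux I C xi mu nu G K T \<longleftrightarrow>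
     (\<forall>s\<in>I.
        C differentiable (at s) \<and> norm (vector_derivative C (at s)) = 1 \<and>
        norm (xi s) = 1 \<and> norm (nu s) = 1 \<and> inner (xi s) (nu s) = 0 \<and>
        mu s = cross3 (nu s) (xi s) \<and>
        (xi has_vector_derivative (G s *\<^sub>R mu s + K s *\<^sub>R nu s)) (at s) \<and>
        (mu has_vector_derivative (- G s *\<^sub>R xi s + T s *\<^sub>R nu s)) (at s) \<and>
        (nu has_vector_derivative (- K s *\<^sub>R xi s - T s *\<^sub>R mu s)) (at s))"

definition xi_helix_with :: "real set \<Rightarrow> (real \<Rightarrow> real^3) \<Rightarrow> real^3 \<Rightarrow> real \<Rightarrow> bool" where
  "xi_helix_with I xi d \<theta> \<longleftrightarrow> norm d = 1 \<and> (\<forall>s\<in>I. inner (xi s) d = cos \<theta>)"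

definition xi_helix :: "real set \<Rightarrow> (real \<Rightarrow> real^3) \<Rightarrow> bool" where
  "xi_helix I xi \<longleftrightarrow> (\<exists>d \<theta>. xi_helix_with I xi d \<theta>)"

definition sigma_xi :: "(real \<Rightarrow> real) \<Rightarrow> (real \<Rightarrow> real) \<Rightarrow> (real \<Rightarrow> real) \<Rightarrow> (real \<Rightarrow> real)
    \<Rightarrow> (real \<Rightarrow> real) \<Rightarrow> real \<Rightarrow> real" where
  "sigma_xi G K T G' K' s =
     (G' s * K s - G s * K' s - ((G s)\<^sup>2 + (K s)\<^sup>2) * T s) / (((G s)\<^sup>2 + (K s)\<^sup>2) powr (3/2))"

end

theory Submission
  imports Defs
begin

lemma vd_inner:
  assumes "(f has_vector_derivative D) (at s)"
  shows "((\<lambda>s. f s \<bullet> c) has_real_derivative (D \<bullet> c)) (at s)"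
proof -
  have "((\<lambda>s. f s \<bullet> c) has_derivative (\<lambda>h. (h *\<^sub>R D) \<bullet> c)) (at s)"
    using assms unfolding has_vector_derivative_def by (rule has_derivative_inner_left)
  moreover have "(\<lambda>h. (h *\<^sub>R D) \<bullet> c) = (*) (D \<bullet> c)" by (auto simp: mult.commute)
  ultimately show ?thesis by (simp add: has_field_derivative_def)
qed

lemma const_deriv0:
  assumes "open I" "s \<in> I" "\<And>x. x \<in> I \<Longrightarrow> f x = k" "(f has_real_derivative D) (at s)"
  shows "D = 0"
proof -
  have "((\<lambda>_. k) has_real_derivative D) (at s)"
    using has_field_derivative_transform_within_open[OF assms(4,1,2)] assms(3) by auto
  moreover have "((\<lambda>_. k) has_real_derivative 0) (at s)" by simp
  ultimately show ?thesis using DERIV_unique by blast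
qed

lemma parseval:
  fixes x y d :: "real^3"
  assumes "norm x = 1" "norm y = 1" "x \<bullet> y = 0" and that: "norm d = 1"
  shows "(x \<bullet> d)^2 + ((cross3 y x) \<bullet> d)^2 + (y \<bullet> d)^2 = 1"
proof -
  let ?z = "cross3 y x"
  have xx: "x \<bullet> x = 1" using assms by (simp add: norm_eq_1)
  have yy: "y \<bullet> y = 1" using assms by (simp add: norm_eq_1)
  have dd: "d \<bullet> d = 1" using that by (simp add: norm_eq_1)
  have zx: "?z \<bullet> x = 0" "?z \<bullet> y = 0" by (simp_all add: dot_cross_self)
  have "(norm ?z)^2 = 1" using norm_cross_dot[of y x] assms by (simp add: inner_commute)
  hence nz: "norm ?z = 1" using norm_ge_zero[of ?z] by (metis abs_of_nonneg power2_eq_1_iff real_sqrt_abs real_sqrt_one)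
  hence zz: "?z \<bullet> ?z = 1" by (simp add: norm_eq_1)
  define v where "v = d - (x \<bullet> d) *\<^sub>R x - (?z \<bullet> d) *\<^sub>R ?z - (y \<bullet> d) *\<^sub>R y"
  have vx: "v \<bullet> x = 0" "v \<bullet> y = 0" "v \<bullet> ?z = 0"
    unfolding v_def using xx yy zz zx assms(3)
    by (simp_all add: inner_diff_left inner_commute[of d] inner_commute[of y x] inner_commute[of ?z x] inner_commute[of ?z y])
  have "cross3 ?z v = 0"
    using cross_skew[of ?z v] Lagrange[of v y x] vx by (simp add: inner_commute)
  hence "norm v = 0" using norm_cross_dot[of ?z v] nz vx by (simp add: inner_commute)
  hence v0: "v = 0" by simp
  hence "d = (x \<bullet> d) *\<^sub>R x + (?z \<bullet> d) *\<^sub>R ?z + (y \<bullet> d) *\<^sub>R y" unfolding v_def by (simp add: algebra_simps)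
  hence "d \<bullet> d = ((x \<bullet> d) *\<^sub>R x + (?z \<bullet> d) *\<^sub>R ?z + (y \<bullet> d) *\<^sub>R y) \<bullet> ((x \<bullet> d) *\<^sub>R x + (?z \<bullet> d) *\<^sub>R ?z + (y \<bullet> d) *\<^sub>R y)" by simp
  also have "\<dots> = (x \<bullet> d)^2 + (?z \<bullet> d)^2 + (y \<bullet> d)^2"
    using xx yy zz zx assms(3) by (simp add: inner_add_left inner_add_right inner_commute power2_eq_square)
  finally show ?thesis using dd by simp
qed
lemma alg_fwd:
  fixes G K G' K' T a b c :: real
  assumes h1: "G*b + K*c = 0"
    and h2: "G'*b + G*(-G*a + T*c) + K'*c + K*(-K*a - T*b) = 0"
    and h3: "a^2+b^2+c^2 = 1"
  shows "(G'*K - G*K' - (G^2+K^2)*T) * (G*c - K*b) = - ((G^2+K^2)^2 * a)"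
    and "(G*c-K*b)^2 = (G^2+K^2)*(1-a^2)"
proof -
  have "(G'*K - G*K' - (G^2+K^2)*T) * (G*c - K*b)
     = -(G^2+K^2)*(G'*b + G*(-G*a + T*c) + K'*c + K*(-K*a - T*b)) - ((G^2+K^2)^2*a) + (G'*G + K'*K)*(G*b+K*c)"
    by (simp add: algebra_simps power2_eq_square)
  then show "(G'*K - G*K' - (G^2+K^2)*T) * (G*c - K*b) = - ((G^2+K^2)^2 * a)" using h1 h2 by simp
  have "(G*c-K*b)^2 = (G^2+K^2)*(b^2+c^2) - (G*b+K*c)^2" by (simp add: algebra_simps power2_eq_square)
  moreover have "b^2+c^2 = 1 - a^2" using h3 by simp
  ultimately show "(G*c-K*b)^2 = (G^2+K^2)*(1-a^2)" using h1 by simp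
qed

lemma powr32: "(x::real) > 0 \<Longrightarrow> x powr (3/2) = x * sqrt x"
proof -
  assume x: "x > 0"
  have "x * sqrt x = x powr 1 * x powr (1/2)" using x powr_half_sqrt[of x] by simp
  also have "\<dots> = x powr (1 + 1/2)" by (rule powr_add[symmetric])
  also have "(1::real) + 1/2 = 3/2" by simp
  finally show ?thesis by simp
qed


lemma frame:
  assumes "myller_darboux I C xi mu nu G K T" "s \<in> I"
  shows "xi s \<bullet> xi s = 1" "nu s \<bullet> nu s = 1" "xi s \<bullet> nu s = 0" "mu s \<bullet> xi s = 0"
    "mu s \<bullet> nu s = 0" "mu s \<bullet> mu s = 1" "nu s \<bullet> xi s = 0" "xi s \<bullet> mu s = 0" "nu s \<bullet> mu s = 0"
proof -
  have h: "norm (xi s) = 1" "norm (nu s) = 1" "xi s \<bullet> nu s = 0" "mu s = cross3 (nu s) (xi s)"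
    using assms unfolding myller_darboux_def by auto
  show x1: "xi s \<bullet> xi s = 1" "nu s \<bullet> nu s = 1" "xi s \<bullet> nu s = 0" using h by (simp_all add: norm_eq_1)
  show x2: "mu s \<bullet> xi s = 0" "mu s \<bullet> nu s = 0" using h by (simp_all add: dot_cross_self)
  have "(norm (mu s))^2 = 1" using norm_cross_dot[of "nu s" "xi s"] h by (simp add: inner_commute)
  hence "norm (mu s) = 1" using norm_ge_zero[of "mu s"] by (metis abs_of_nonneg power2_eq_1_iff real_sqrt_abs real_sqrt_one)
  thus "mu s \<bullet> mu s = 1" by (simp add: norm_eq_1)
  show "nu s \<bullet> xi s = 0" "xi s \<bullet> mu s = 0" "nu s \<bullet> mu s = 0" using x1 x2 by (simp_all add: inner_commute)
qed

lemma fwd: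
  fixes I :: "real set" and C xi mu nu :: "real \<Rightarrow> real^3" and G K T G' K' :: "real \<Rightarrow> real"
  assumes "open I"
    and md: "myller_darboux I C xi mu nu G K T"
    and dG0: "\<forall>s\<in>I. (G has_real_derivative G' s) (at s)"
    and dK0: "\<forall>s\<in>I. (K has_real_derivative K' s) (at s)"
    and nz0: "\<forall>s\<in>I. (G s, K s) \<noteq> (0, 0)"
    and hx: "xi_helix_with I xi d \<theta>"
    and sI: "s \<in> I"
  shows "sin \<theta> \<noteq> 0 \<and> (sigma_xi G K T G' K' s * sin \<theta>)^2 = (cos \<theta>)^2
     \<and> G s * (nu s \<bullet> d) - K s * (mu s \<bullet> d) \<noteq> 0
     \<and> sigma_xi G K T G' K' s = - cos \<theta> * sqrt ((G s)^2 + (K s)^2) / (G s * (nu s \<bullet> d) - K s * (mu s \<bullet> d))"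
proof -
  have dG: "\<And>s. s \<in> I \<Longrightarrow> (G has_real_derivative G' s) (at s)" using dG0 by blast
  have dK: "\<And>s. s \<in> I \<Longrightarrow> (K has_real_derivative K' s) (at s)" using dK0 by blast
  have nz: "\<And>s. s \<in> I \<Longrightarrow> (G s, K s) \<noteq> (0, 0)" using nz0 by blast
  define a where "a = cos \<theta>"
  define b where "b = (\<lambda>s. mu s \<bullet> d)"
  define c where "c = (\<lambda>s. nu s \<bullet> d)"
  have xd: "\<And>s. s \<in> I \<Longrightarrow> xi s \<bullet> d = a" and nd: "norm d = 1"
    using hx unfolding xi_helix_with_def a_def by auto
  have D: "\<And>s. s \<in> I \<Longrightarrow> (xi has_vector_derivative (G s *\<^sub>R mu s + K s *\<^sub>R nu s)) (at s) \<and>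
        (mu has_vector_derivative (- G s *\<^sub>R xi s + T s *\<^sub>R nu s)) (at s) \<and>
        (nu has_vector_derivative (- K s *\<^sub>R xi s - T s *\<^sub>R mu s)) (at s)"
    using md unfolding myller_darboux_def by auto
  have e0: "G s * b s + K s * c s = 0" if "s \<in> I" for s
  proof -
    have dd: "((\<lambda>s. xi s \<bullet> d) has_real_derivative ((G s *\<^sub>R mu s + K s *\<^sub>R nu s) \<bullet> d)) (at s)"
      using D[OF that] by (intro vd_inner) auto
    have "(G s *\<^sub>R mu s + K s *\<^sub>R nu s) \<bullet> d = 0"
      using const_deriv0[OF \<open>open I\<close> that _ dd] xd by blast
    thus ?thesis unfolding b_def c_def by (simp add: inner_add_left)
  qed
  have bd: "(b has_real_derivative (- G s * a + T s * c s)) (at s)"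
  proof -
    have "(b has_real_derivative ((- G s *\<^sub>R xi s + T s *\<^sub>R nu s) \<bullet> d)) (at s)"
      unfolding b_def using D[OF sI] by (intro vd_inner) auto
    thus ?thesis using xd[OF sI] unfolding c_def by (simp add: inner_add_left inner_diff_left algebra_simps)
  qed
  have cd: "(c has_real_derivative (- K s * a - T s * b s)) (at s)"
  proof -
    have "(c has_real_derivative ((- K s *\<^sub>R xi s - T s *\<^sub>R mu s) \<bullet> d)) (at s)"
      unfolding c_def using D[OF sI] by (intro vd_inner) auto
    thus ?thesis using xd[OF sI] unfolding b_def by (simp add: inner_add_left inner_diff_left algebra_simps)
  qed
  have de: "((\<lambda>s. G s * b s + K s * c s) has_real_derivative
       (G s * (- G s * a + T s * c s) + G' s * b s + (K s * (- K s * a - T s * b s) + K' s * c s))) (at s)"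
    by (intro DERIV_add DERIV_mult' dG dK sI bd cd)
  have "G s * (- G s * a + T s * c s) + G' s * b s + (K s * (- K s * a - T s * b s) + K' s * c s) = 0"
    using const_deriv0[OF \<open>open I\<close> sI _ de] e0 by blast
  hence h2: "G' s * b s + G s * (- G s * a + T s * c s) + K' s * c s + K s * (- K s * a - T s * b s) = 0"
    by (simp add: algebra_simps)
  have h3: "a^2 + b s^2 + c s^2 = 1"
    using parseval[of "xi s" "nu s" d] frame[OF md sI] nd md sI xd[OF sI]
    unfolding myller_darboux_def b_def c_def by auto
  note A = alg_fwd[OF e0[OF sI] h2 h3]
  define N where "N = (G s)^2 + (K s)^2"
  define w where "w = G s * c s - K s * b s"
  define num where "num = G' s * K s - G s * K' s - N * T s"
  have Npos: "N > 0" using nz[OF sI] unfolding N_def by (auto simp: sum_power2_gt_zero_iff)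
  have A1: "num * w = - (N^2 * a)" using A(1) unfolding num_def w_def N_def by simp
  have A2: "w^2 = N * (1 - a^2)" using A(2) unfolding w_def N_def by simp
  have sin2: "(sin \<theta>)^2 = 1 - a^2" unfolding a_def by (simp add: sin_squared_eq)
  have a1: "a^2 \<noteq> 1"
  proof
    assume "a^2 = 1"
    hence "w = 0" using A2 by simp
    hence "a = 0" using A1 Npos by simp
    with \<open>a^2 = 1\<close> show False by simp
  qed
  have sn: "sin \<theta> \<noteq> 0" using sin2 a1 by auto
  have wn: "w \<noteq> 0" using A2 a1 Npos by (auto simp: sin2)
  have sig: "sigma_xi G K T G' K' s = num / (N * sqrt N)"
    unfolding sigma_xi_def num_def N_def using powr32[OF Npos] unfolding N_def by simp
  have sqN: "sqrt N * sqrt N = N" using Npos by simp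
  have sw: "sigma_xi G K T G' K' s * w = - a * sqrt N"
  proof -
    have "sigma_xi G K T G' K' s * w = num * w / (N * sqrt N)" using sig by simp
    also have "\<dots> = - (N^2 * a) / (N * sqrt N)" using A1 by simp
    also have "\<dots> = - a * sqrt N" using Npos sqN by (simp add: field_simps power2_eq_square)
    finally show ?thesis .
  qed
  have "(sigma_xi G K T G' K' s * w)^2 = a^2 * N" using sw Npos by (simp add: power_mult_distrib)
  hence "(sigma_xi G K T G' K' s)^2 * (N * (1 - a^2)) = a^2 * N" using A2 by (simp add: power_mult_distrib)
  hence "(sigma_xi G K T G' K' s)^2 * (1 - a^2) = a^2" using Npos
    by (metis (no_types, lifting) mult.assoc mult.commute mult_cancel_left order_less_irrefl)
  hence "(sigma_xi G K T G' K' s * sin \<theta>)^2 = (cos \<theta>)^2" using sin2 unfolding a_def by (simp add: power_mult_distrib)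
  moreover have "sigma_xi G K T G' K' s = - a * sqrt N / w" using sw wn by (simp add: field_simps)
  ultimately show ?thesis using sn wn unfolding a_def N_def w_def b_def c_def by simp
qed


lemma alg_bwd:
  fixes G K G' K' T r k a c :: real
  assumes r: "r > 0" "r^2 = G^2+K^2"
    and num: "G'*K - G*K' - (G^2+K^2)*T = c*(G^2+K^2)*r" and ak: "a + k*c = 0"
  shows "a*G - (-k*(G*G'+K*K')/r^3)*K - (k/r)*K' - (k/r)*T*G = 0"
    and "a*K + (-k*(G*G'+K*K')/r^3)*G + (k/r)*G' - (k/r)*T*K = 0"
proof -
  have r3: "r^3 = r*(G^2+K^2)" using r(2) by (simp add: power3_eq_cube power2_eq_square)
  have "(a*G - (-k*(G*G'+K*K')/r^3)*K - (k/r)*K' - (k/r)*T*G) * r^3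
      = a*G*r^3 + k*K*(G*G'+K*K') - k*K'*r^2 - k*T*G*r^2"
    using r(1) by (simp add: field_simps power3_eq_cube power2_eq_square)
  also have "\<dots> = G*r*(G^2+K^2)*a + k*G*(G'*K - G*K' - (G^2+K^2)*T)"
    unfolding r3 r(2) by (simp add: algebra_simps power2_eq_square)
  also have "\<dots> = G*r*(G^2+K^2)*(a + k*c)" unfolding num by (simp add: algebra_simps)
  finally show "a*G - (-k*(G*G'+K*K')/r^3)*K - (k/r)*K' - (k/r)*T*G = 0" using ak r(1) by simp
  have "(a*K + (-k*(G*G'+K*K')/r^3)*G + (k/r)*G' - (k/r)*T*K) * r^3
      = a*K*r^3 - k*G*(G*G'+K*K') + k*G'*r^2 - k*T*K*r^2"
    using r(1) by (simp add: field_simps power3_eq_cube power2_eq_square)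
  also have "\<dots> = K*r*(G^2+K^2)*a + k*K*(G'*K - G*K' - (G^2+K^2)*T)"
    unfolding r3 r(2) by (simp add: algebra_simps power2_eq_square)
  also have "\<dots> = K*r*(G^2+K^2)*(a + k*c)" unfolding num by (simp add: algebra_simps)
  finally show "a*K + (-k*(G*G'+K*K')/r^3)*G + (k/r)*G' - (k/r)*T*K = 0" using ak r(1) by simp
qed

lemma bwd:
  fixes I :: "real set" and C xi mu nu :: "real \<Rightarrow> real^3" and G K T G' K' :: "real \<Rightarrow> real"
  assumes "is_interval I" and "I \<noteq> {}"
    and md: "myller_darboux I C xi mu nu G K T"
    and dG0: "\<forall>s\<in>I. (G has_real_derivative G' s) (at s)"
    and dK0: "\<forall>s\<in>I. (K has_real_derivative K' s) (at s)"
    and nz0: "\<forall>s\<in>I. (G s, K s) \<noteq> (0, 0)"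
    and sc: "\<forall>s\<in>I. sigma_xi G K T G' K' s = c"
  shows "xi_helix I xi"
proof -
  have D: "\<And>s. s \<in> I \<Longrightarrow> (xi has_vector_derivative (G s *\<^sub>R mu s + K s *\<^sub>R nu s)) (at s) \<and>
        (mu has_vector_derivative (- G s *\<^sub>R xi s + T s *\<^sub>R nu s)) (at s) \<and>
        (nu has_vector_derivative (- K s *\<^sub>R xi s - T s *\<^sub>R mu s)) (at s)"
    using md unfolding myller_darboux_def by auto
  define k where "k = 1 / sqrt (1 + c^2)"
  define a where "a = - c * k"
  have ak: "a + k * c = 0" unfolding a_def by simp
  have "sqrt (1 + c^2) > 0" by (simp add: add_pos_nonneg)
  hence ak2: "a^2 + k^2 = 1" unfolding a_def k_def
    by (simp add: field_simps power_mult_distrib add_nonneg_nonneg)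
  define N where "N = (\<lambda>s. (G s)^2 + (K s)^2)"
  define t where "t = (\<lambda>s. k * inverse (sqrt (N s)))"
  define V where "V = (\<lambda>s. G s *\<^sub>R nu s - K s *\<^sub>R mu s)"
  define dd where "dd = (\<lambda>s. a *\<^sub>R xi s + t s *\<^sub>R V s)"
  have Npos: "N s > 0" if "s \<in> I" for s using nz0 that unfolding N_def by (auto simp: sum_power2_gt_zero_iff)
  have dd0: "(dd has_vector_derivative 0) (at s within I)" if sI: "s \<in> I" for s
  proof -
    define r where "r = sqrt (N s)"
    have r: "r > 0" "r^2 = (G s)^2 + (K s)^2" using Npos[OF sI] unfolding r_def N_def by auto
    have dG: "(G has_real_derivative G' s) (at s)" and dK: "(K has_real_derivative K' s) (at s)"
      using dG0 dK0 sI by auto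
    have dN: "(N has_real_derivative (2 * G s * G' s + 2 * K s * K' s)) (at s)"
      unfolding N_def by (auto intro!: derivative_eq_intros dG dK)
    have dr: "((\<lambda>s. sqrt (N s)) has_real_derivative (inverse r / 2 * (2 * G s * G' s + 2 * K s * K' s))) (at s)"
      unfolding r_def by (rule DERIV_chain2[OF DERIV_real_sqrt[OF Npos[OF sI]] dN])
    have dt0: "(t has_real_derivative k * (- ((inverse r / 2 * (2 * G s * G' s + 2 * K s * K' s)) * inverse (r ^ 2)))) (at s)"
    proof -
      have "((\<lambda>x. inverse (sqrt (N x))) has_real_derivative - ((inverse r / 2 * (2 * G s * G' s + 2 * K s * K' s)) * inverse (sqrt (N s) ^ Suc (Suc 0)))) (at s)"
        by (rule DERIV_inverse_fun[OF dr]) (use r(1) r_def in auto)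
      hence "((\<lambda>x. inverse (sqrt (N x))) has_real_derivative - ((inverse r / 2 * (2 * G s * G' s + 2 * K s * K' s)) * inverse (r ^ 2))) (at s)"
        unfolding r_def by (simp add: numeral_2_eq_2)
      thus ?thesis unfolding t_def by (rule DERIV_cmult)
    qed
    have t': "k * (- ((inverse r / 2 * (2 * G s * G' s + 2 * K s * K' s)) * inverse (r ^ 2))) = -k*(G s*G' s+K s*K' s)/r^3"
      using r(1) by (simp add: field_simps power3_eq_cube power2_eq_square)
    have ts: "t s = k / r" unfolding t_def r_def by (simp add: field_simps)
    have dt: "(t has_real_derivative (-k*(G s*G' s+K s*K' s)/r^3)) (at s)" using dt0 t' by simp
    have dV: "(V has_vector_derivative (G s *\<^sub>R (- K s *\<^sub>R xi s - T s *\<^sub>R mu s) + G' s *\<^sub>R nu s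
        - (K s *\<^sub>R (- G s *\<^sub>R xi s + T s *\<^sub>R nu s) + K' s *\<^sub>R mu s))) (at s)"
      unfolding V_def using D[OF sI] dG dK
      by (intro has_vector_derivative_diff has_vector_derivative_scaleR) auto
    have dX: "(dd has_vector_derivative (a *\<^sub>R (G s *\<^sub>R mu s + K s *\<^sub>R nu s) + 0 *\<^sub>R xi s +
        (t s *\<^sub>R (G s *\<^sub>R (- K s *\<^sub>R xi s - T s *\<^sub>R mu s) + G' s *\<^sub>R nu s
        - (K s *\<^sub>R (- G s *\<^sub>R xi s + T s *\<^sub>R nu s) + K' s *\<^sub>R mu s)) + (-k*(G s*G' s+K s*K' s)/r^3) *\<^sub>R V s))) (at s)"
      unfolding dd_def using D[OF sI]
      by (intro has_vector_derivative_add has_vector_derivative_scaleR DERIV_const dt dV) auto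
    define \<beta> where "\<beta> = a*G s - (-k*(G s*G' s+K s*K' s)/r^3)*K s - (k/r)*K' s - (k/r)*T s*G s"
    define \<gamma> where "\<gamma> = a*K s + (-k*(G s*G' s+K s*K' s)/r^3)*G s + (k/r)*G' s - (k/r)*T s*K s"
    have X: "a *\<^sub>R (G s *\<^sub>R mu s + K s *\<^sub>R nu s) + 0 *\<^sub>R xi s +
        (t s *\<^sub>R (G s *\<^sub>R (- K s *\<^sub>R xi s - T s *\<^sub>R mu s) + G' s *\<^sub>R nu s
        - (K s *\<^sub>R (- G s *\<^sub>R xi s + T s *\<^sub>R nu s) + K' s *\<^sub>R mu s)) + (-k*(G s*G' s+K s*K' s)/r^3) *\<^sub>R V s)
        = \<beta> *\<^sub>R mu s + \<gamma> *\<^sub>R nu s"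
      unfolding \<beta>_def \<gamma>_def V_def ts by (simp add: algebra_simps)
    have num: "G' s*K s - G s*K' s - ((G s)^2+(K s)^2)*T s = c*((G s)^2+(K s)^2)*r"
    proof -
      have "sigma_xi G K T G' K' s = c" using sc sI by auto
      hence "(G' s*K s - G s*K' s - ((G s)^2+(K s)^2)*T s) / (N s * r) = c"
        unfolding sigma_xi_def r_def N_def using powr32[OF Npos[OF sI]] unfolding N_def by simp
      moreover have "N s * r > 0" using Npos[OF sI] r(1) by simp
      ultimately have "G' s*K s - G s*K' s - ((G s)^2+(K s)^2)*T s = c * (N s * r)"
        by (auto simp: divide_eq_eq split: if_splits)
      thus ?thesis unfolding N_def by (simp add: algebra_simps)
    qed
    have "\<beta> = 0" "\<gamma> = 0" unfolding \<beta>_def \<gamma>_def using alg_bwd[OF r num ak] by auto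
    hence "(dd has_vector_derivative 0) (at s)" using dX X by simp
    thus ?thesis by (rule has_vector_derivative_at_within)
  qed
  obtain D0 where D0: "\<And>s. s \<in> I \<Longrightarrow> dd s = D0"
    using has_vector_derivative_zero_constant[OF is_interval_convex[OF assms(1)] dd0] by blast
  obtain s0 where s0: "s0 \<in> I" using assms(2) by blast
  note fr = frame[OF md]
  have "dd s0 \<bullet> dd s0 = a^2 + (t s0)^2 * N s0"
    unfolding dd_def V_def N_def using fr[OF s0]
    by (simp add: inner_add_left inner_add_right inner_diff_left inner_diff_right power2_eq_square algebra_simps)
  also have "(t s0)^2 * N s0 = k^2" unfolding t_def using Npos[OF s0]
    by (simp add: power_mult_distrib power_inverse)
  finally have "D0 \<bullet> D0 = 1" using D0[OF s0] ak2 by simp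
  hence nD: "norm D0 = 1" by (simp add: norm_eq_1)
  have xa: "xi s \<bullet> D0 = a" if "s \<in> I" for s
    using D0[OF that] fr[OF that] unfolding dd_def V_def
    by (auto simp: inner_add_right inner_diff_right)
  have "a^2 \<le> 1" using ak2 by (smt (verit) zero_le_power2)
  hence "-1 \<le> a" "a \<le> 1" using abs_le_square_iff[of a 1] by auto
  hence "cos (arccos a) = a" by simp
  hence "xi_helix_with I xi D0 (arccos a)" unfolding xi_helix_with_def using nD xa by simp
  thus ?thesis unfolding xi_helix_def by blast
qed

lemma cot_pm:
  assumes "sin \<theta> \<noteq> 0" "(x * sin \<theta>)^2 = (cos \<theta>)^2"
  shows "cot \<theta> = x \<or> cot \<theta> = - x"
proof -
  have "x * sin \<theta> = cos \<theta> \<or> x * sin \<theta> = - cos \<theta>" using assms(2) by (simp add: power2_eq_iff)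
  thus ?thesis using assms(1) unfolding cot_def by (auto simp: field_simps)
qed

theorem theorem6:
  fixes I :: "real set" and C xi mu nu :: "real \<Rightarrow> real^3" and G K T G' K' :: "real \<Rightarrow> real"
  assumes "open I" and "is_interval I" and "I \<noteq> {}"
    and "myller_darboux I C xi mu nu G K T"
    and "\<And>s. s \<in> I \<Longrightarrow> (G has_real_derivative G' s) (at s)"
    and "\<And>s. s \<in> I \<Longrightarrow> (K has_real_derivative K' s) (at s)"
    and "\<And>s. s \<in> I \<Longrightarrow> (G s, K s) \<noteq> (0, 0)"
  shows "(xi_helix I xi \<longleftrightarrow> (\<exists>c. \<forall>s\<in>I. sigma_xi G K T G' K' s = c))
    \<and> (\<forall>d \<theta>. xi_helix_with I xi d \<theta> \<longrightarrow>
          (\<forall>s\<in>I. cot \<theta> = sigma_xi G K T G' K' s \<or> cot \<theta> = - sigma_xi G K T G' K' s))"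
proof -
  have a567: "\<forall>s\<in>I. (G has_real_derivative G' s) (at s)" "\<forall>s\<in>I. (K has_real_derivative K' s) (at s)"
    "\<forall>s\<in>I. (G s, K s) \<noteq> (0, 0)" using assms(5,6,7) by blast+
  note F = fwd[OF assms(1,4) a567]
  have part2: "\<forall>d \<theta>. xi_helix_with I xi d \<theta> \<longrightarrow>
          (\<forall>s\<in>I. cot \<theta> = sigma_xi G K T G' K' s \<or> cot \<theta> = - sigma_xi G K T G' K' s)"
    using F cot_pm by blast
  have D: "\<And>s. s \<in> I \<Longrightarrow> (xi has_vector_derivative (G s *\<^sub>R mu s + K s *\<^sub>R nu s)) (at s) \<and>
        (mu has_vector_derivative (- G s *\<^sub>R xi s + T s *\<^sub>R nu s)) (at s) \<and>
        (nu has_vector_derivative (- K s *\<^sub>R xi s - T s *\<^sub>R mu s)) (at s)"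
    using assms(4) unfolding myller_darboux_def by auto
  have conn: "connected I" using assms(2) by (simp add: is_interval_connected)
  have "\<exists>c. \<forall>s\<in>I. sigma_xi G K T G' K' s = c" if H: "xi_helix I xi"
  proof -
    obtain d \<theta> where h: "xi_helix_with I xi d \<theta>" using H unfolding xi_helix_def by blast
    define f where "f = (\<lambda>s. - cos \<theta> * sqrt ((G s)^2 + (K s)^2) / (G s * (nu s \<bullet> d) - K s * (mu s \<bullet> d)))"
    have "continuous_on I f"
    proof (intro continuous_at_imp_continuous_on ballI)
      fix s assume sI: "s \<in> I"
      have c1: "isCont G s" "isCont K s" using assms(5,6)[OF sI] by (auto intro: DERIV_isCont)
      have c2: "isCont (\<lambda>s. nu s \<bullet> d) s" "isCont (\<lambda>s. mu s \<bullet> d) s"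
        using D[OF sI] by (auto intro!: DERIV_isCont vd_inner)
      have c3: "isCont nu s" "isCont mu s" using D[OF sI] by (auto intro: has_vector_derivative_continuous)
      show "isCont f s" unfolding f_def using c1 c3 F[OF h sI]
        by (intro continuous_intros) auto
    qed
    hence cs: "continuous_on I (sigma_xi G K T G' K')"
      by (rule continuous_on_eq) (use F[OF h] f_def in auto)
    have "sigma_xi G K T G' K' ` I \<subseteq> {cot \<theta>, - cot \<theta>}"
      using F[OF h] cot_pm by fastforce
    hence "finite (sigma_xi G K T G' K' ` I)" by (rule finite_subset) simp
    then have "sigma_xi G K T G' K' constant_on I"
      by (rule continuous_finite_range_constant[OF conn cs])
    thus ?thesis unfolding constant_on_def by blast
  qed
  moreover have "xi_helix I xi" if "\<exists>c. \<forall>s\<in>I. sigma_xi G K T G' K' s = c"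
    using that bwd[OF assms(2,3,4) a567] by blast
  ultimately show ?thesis using part2 by blast
qed

end
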